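(* Let $M$ be a bicomplex Hilbert space (as defined below) and let $A:M\to M$ be a bicomplex self-adjoint operator, i.e. a $\mathbb{T}$-linear operator with $A=A^*$. Suppose $A|\psi\rangle=\lambda|\psi\rangle$ with $\lambda\in\mathbb{T}$ and $|\psi\rangle\in M$ not in the null-cone, i.e. $|\psi\rangle=\mathbf{e_1}|\psi_{\mathbf{e_1}}\rangle+\mathbf{e_2}|\psi_{\mathbf{e_2}}\rangle$ with $|\psi_{\mathbf{e_1}}\rangle\ne0$ and $|\psi_{\mathbf{e_2}}\rangle\ne0$. Then $\lambda\in\mathbb{D}$, i.e. $\lambda$ is a hyperbolic number.
   Context: Bicomplex numbers: $\mathbb{T}=\{z_1+z_2\mathbf{i_2}: z_1,z_2\in\mathbb{C}(\mathbf{i_1})\}$, $\mathbb{C}(\mathbf{i_1})=\{x+y\mathbf{i_1}: x,y\in\mathbb{R}\}$, $\mathbf{i_1}^2=\mathbf{i_2}^2=-1$, $\mathbf{i_1}\mathbf{i_2}=\mathbf{i_2}\mathbf{i_1}=\mathbf{j}$, $\mathbf{j}^2=1$ (commutative). Hyperbolic numbers $\mathbb{D}=\{x+y\mathbf{j}:x,y\in\mathbb{R}\}$. Idempotents $\mathbf{e_1}=(1+\mathbf{j})/2$, $\mathbf{e_2}=(1-\mathbf{j})/2$. Conjugation: $(z_1+z_2\mathbf{i_2})^{\dagger_3}=\overline{z_1}-\overline{z_2}\mathbf{i_2}$. $\mathbb{D}^+=\{a\mathbf{e_1}+b\mathbf{e_2}: a,b\ge 0\}$. $M$ is a free $\mathbb{T}$-module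 with finite basis $\{|m_1\rangle,\dots,|m_n\rangle\}$, $V=\{\sum x_l|m_l\rangle: x_l\in\mathbb{C}(\mathbf{i_1})\}$; for $|\phi\rangle=\sum x_l|m_l\rangle$ with $x_l=x_{1l}\mathbf{e_1}+x_{2l}\mathbf{e_2}$, $x_{kl}\in\mathbb{C}(\mathbf{i_1})$, set $|\phi_{\mathbf{e_k}}\rangle=\sum_l x_{kl}|m_l\rangle\in V$, so $|\phi\rangle=\mathbf{e_1}|\phi_{\mathbf{e_1}}\rangle+\mathbf{e_2}|\phi_{\mathbf{e_2}}\rangle$ uniquely. $M$ carries a bicomplex scalar product $(\cdot,\cdot):M\times M\to\mathbb{T}$: additive in the second argument, $(|\phi\rangle,\alpha|\psi\rangle)=\alpha(|\phi\rangle,|\psi\rangle)$ for $\alpha\in\mathbb{T}$, $(|\phi\rangle,|\psi\rangle)=(|\psi\rangle,|\phi\rangle)^{\dagger_3}$, $(|\phi\rangle,|\phi\rangle)=0\iff|\phi\rangle=0$, hyperbolic positive ($(|\phi\rangle,|\phi\rangle)\in\mathbb{D}^+$) and closed on $V$ ($(|\phi\rangle,|\psi\rangle)\in\mathbb{C}(\mathbf{i_1})$ for $|\phi\rangle,|\psi\rangle\in V$); "bicomplex Hilbert space" means moreover $M$ is complete for the norm $\|\phi\|=\big((\|\phi_{\mathbf{e_1}}\|^2+\|\phi_{\mathbf{e_2}}\|^2)/2\big)^{1/2}$, $\|\chi\|=(\chi,\chi)^{1/2}$ on $V$. The bicomplex adjoint $A^*$ of a $\mathbb{T}$-linear $A$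 is the operator with $(A|\psi\rangle,|\phi\rangle)=(|\psi\rangle,A^*|\phi\rangle)$ for all $|\phi\rangle,|\psi\rangle\in M$. *)

theory Defs
  imports Complex_Main
begin

text \<open>A bicomplex number z1 + z2 i2 with z1, z2 in C(i1); the complex unit of
  the type complex plays the role of i1.\<close>

datatype bicomplex = BC (bc1: complex) (bc2: complex)

instantiation bicomplex :: comm_ring_1
begin
definition "0 = BC 0 0"
definition "1 = BC 1 0"
definition "x + y = BC (bc1 x + bc1 y) (bc2 x + bc2 y)"
definition "x - y = BC (bc1 x - bc1 y) (bc2 x - bc2 y)"
definition "- x = BC (- bc1 x) (- bc2 x)"
definition "x * y = BC (bc1 x * bc1 y - bc2 x * bc2 y) (bc1 x * bc2 y + bc2 x * bc1 y)"
instance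
  by standard
     (auto simp: zero_bicomplex_def one_bicomplex_def plus_bicomplex_def
        minus_bicomplex_def uminus_bicomplex_def times_bicomplex_def algebra_simps
        intro!: bicomplex.expand)
end

definition bc_i1 :: bicomplex where "bc_i1 = BC \<i> 0"
definition bc_i2 :: bicomplex where "bc_i2 = BC 0 1"
definition bc_j :: bicomplex where "bc_j = bc_i1 * bc_i2"
definition bc_e1 :: bicomplex where "bc_e1 = BC (1/2) 0 * (1 + bc_j)"
definition bc_e2 :: bicomplex where "bc_e2 = BC (1/2) 0 * (1 - bc_j)"

definition of_cplx :: "complex \<Rightarrow> bicomplex" where "of_cplx z = BC z 0"

definition hyperbolic :: "bicomplex set" where
  "hyperbolic = {of_cplx (complex_of_real x) + of_cplx (complex_of_real y) * bc_j | x y. True}"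

definition hyperbolic_pos :: "bicomplex set" where
  "hyperbolic_pos = {of_cplx (complex_of_real a) * bc_e1 + of_cplx (complex_of_real b) * bc_e2
                     | a b. a \<ge> 0 \<and> b \<ge> 0}"

definition conj3 :: "bicomplex \<Rightarrow> bicomplex" where
  "conj3 z = BC (cnj (bc1 z)) (- cnj (bc2 z))"

text \<open>Idempotent components: z = proj1 z * e1 + proj2 z * e2 (unique, with
  proj_k z in C(i1)).\<close>
definition bc_proj1 :: "bicomplex \<Rightarrow> complex" where "bc_proj1 z = bc1 z - \<i> * bc2 z"
definition bc_proj2 :: "bicomplex \<Rightarrow> complex" where "bc_proj2 z = bc1 z + \<i> * bc2 z"

text \<open>M is modelled as the coordinate module of functions 'n \<Rightarrow> bicomplex over a
  finite index type 'n; the basis vector |m_l> is the l-th unit vector.\<close>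

type_synonym 'n bvec = "'n \<Rightarrow> bicomplex"

definition vadd :: "'n bvec \<Rightarrow> 'n bvec \<Rightarrow> 'n bvec" where "vadd x y = (\<lambda>l. x l + y l)"
definition vsub :: "'n bvec \<Rightarrow> 'n bvec \<Rightarrow> 'n bvec" where "vsub x y = (\<lambda>l. x l - y l)"
definition vscale :: "bicomplex \<Rightarrow> 'n bvec \<Rightarrow> 'n bvec" where "vscale a x = (\<lambda>l. a * x l)"
definition vzero :: "'n bvec" where "vzero = (\<lambda>l. 0)"

text \<open>V = the C(i1)-span of the basis.\<close>
definition Vspace :: "'n bvec set" where "Vspace = {x. \<forall>l. bc2 (x l) = 0}"

definition vproj1 :: "'n bvec \<Rightarrow> 'n bvec" where "vproj1 x = (\<lambda>l. of_cplx (bc_proj1 (x l)))"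
definition vproj2 :: "'n bvec \<Rightarrow> 'n bvec" where "vproj2 x = (\<lambda>l. of_cplx (bc_proj2 (x l)))"

definition bicomplex_scalar_product :: "('n::finite bvec \<Rightarrow> 'n bvec \<Rightarrow> bicomplex) \<Rightarrow> bool" where
  "bicomplex_scalar_product sp \<longleftrightarrow>
     (\<forall>\<phi> \<psi> \<chi>. sp \<phi> (vadd \<psi> \<chi>) = sp \<phi> \<psi> + sp \<phi> \<chi>) \<and>
     (\<forall>\<phi> \<psi> \<alpha>. sp \<phi> (vscale \<alpha> \<psi>) = \<alpha> * sp \<phi> \<psi>) \<and>
     (\<forall>\<phi> \<psi>. sp \<phi> \<psi> = conj3 (sp \<psi> \<phi>)) \<and>
     (\<forall>\<phi>. sp \<phi> \<phi> = 0 \<longleftrightarrow> \<phi> = vzero) \<and>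
     (\<forall>\<phi>. sp \<phi> \<phi> \<in> hyperbolic_pos) \<and>
     (\<forall>\<phi> \<psi>. \<phi> \<in> Vspace \<longrightarrow> \<psi> \<in> Vspace \<longrightarrow> sp \<phi> \<psi> \<in> range of_cplx)"

text \<open>Norm on V: ||chi|| = (chi,chi)^(1/2) (a nonnegative real number for chi in V).\<close>
definition Vnorm :: "('n bvec \<Rightarrow> 'n bvec \<Rightarrow> bicomplex) \<Rightarrow> 'n bvec \<Rightarrow> real" where
  "Vnorm sp \<chi> = sqrt (Re (bc1 (sp \<chi> \<chi>)))"

definition Mnorm :: "('n bvec \<Rightarrow> 'n bvec \<Rightarrow> bicomplex) \<Rightarrow> 'n bvec \<Rightarrow> real" where
  "Mnorm sp \<phi> = sqrt ((Vnorm sp (vproj1 \<phi>) ^ 2 + Vnorm sp (vproj2 \<phi>) ^ 2) / 2)"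

definition bicomplex_hilbert_space :: "('n::finite bvec \<Rightarrow> 'n bvec \<Rightarrow> bicomplex) \<Rightarrow> bool" where
  "bicomplex_hilbert_space sp \<longleftrightarrow> bicomplex_scalar_product sp \<and>
     (\<forall>X :: nat \<Rightarrow> 'n bvec.
        (\<forall>e>0. \<exists>N. \<forall>m\<ge>N. \<forall>k\<ge>N. Mnorm sp (vsub (X m) (X k)) < e) \<longrightarrow>
        (\<exists>L. \<forall>e>0. \<exists>N. \<forall>k\<ge>N. Mnorm sp (vsub (X k) L) < e))"

definition T_linear :: "('n bvec \<Rightarrow> 'n bvec) \<Rightarrow> bool" where
  "T_linear A \<longleftrightarrow> (\<forall>x y. A (vadd x y) = vadd (A x) (A y)) \<and>
                   (\<forall>a x. A (vscale a x) = vscale a (A x))"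

text \<open>A* is characterised by (A psi, phi) = (psi, A* phi); A = A* means:\<close>
definition self_adjoint :: "('n bvec \<Rightarrow> 'n bvec \<Rightarrow> bicomplex) \<Rightarrow> ('n bvec \<Rightarrow> 'n bvec) \<Rightarrow> bool" where
  "self_adjoint sp A \<longleftrightarrow> T_linear A \<and> (\<forall>\<psi> \<phi>. sp (A \<psi>) \<phi> = sp \<psi> (A \<phi>))"

end

theory Submission
  imports Defs
begin

lemmas bc_defs = zero_bicomplex_def one_bicomplex_def plus_bicomplex_def
        minus_bicomplex_def uminus_bicomplex_def times_bicomplex_def

lemma conj3_mult: "conj3 (a * b) = conj3 a * conj3 b"
  by (simp add: conj3_def bc_defs)

lemma conj3_add: "conj3 (a + b) = conj3 a + conj3 b"
  by (simp add: conj3_def bc_defs)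

lemma conj3_conj3: "conj3 (conj3 a) = a"
  by (simp add: conj3_def)

lemma e1_eq: "bc_e1 = BC (1/2) (\<i>/2)"
  by (simp add: bc_e1_def bc_j_def bc_i1_def bc_i2_def bc_defs)
lemma e2_eq: "bc_e2 = BC (1/2) (-\<i>/2)"
  by (simp add: bc_e2_def bc_j_def bc_i1_def bc_i2_def bc_defs)

lemma conj3_e1: "conj3 bc_e1 = bc_e1" by (simp add: e1_eq conj3_def)
lemma conj3_e2: "conj3 bc_e2 = bc_e2" by (simp add: e2_eq conj3_def)

lemma proj1_mult: "bc_proj1 (a * b) = bc_proj1 a * bc_proj1 b"
  by (simp add: bc_proj1_def bc_defs algebra_simps)
lemma proj2_mult: "bc_proj2 (a * b) = bc_proj2 a * bc_proj2 b"
  by (simp add: bc_proj2_def bc_defs algebra_simps)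
lemma proj1_add: "bc_proj1 (a + b) = bc_proj1 a + bc_proj1 b"
  by (simp add: bc_proj1_def bc_defs algebra_simps)
lemma proj2_add: "bc_proj2 (a + b) = bc_proj2 a + bc_proj2 b"
  by (simp add: bc_proj2_def bc_defs algebra_simps)

lemma proj1_e1: "bc_proj1 bc_e1 = 1" by (simp add: e1_eq bc_proj1_def)
lemma proj1_e2: "bc_proj1 bc_e2 = 0" by (simp add: e2_eq bc_proj1_def)
lemma proj2_e1: "bc_proj2 bc_e1 = 0" by (simp add: e1_eq bc_proj2_def)
lemma proj2_e2: "bc_proj2 bc_e2 = 1" by (simp add: e2_eq bc_proj2_def)
lemma proj_of_cplx: "bc_proj1 (of_cplx z) = z" "bc_proj2 (of_cplx z) = z"
  by (simp_all add: of_cplx_def bc_proj1_def bc_proj2_def)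

lemma proj_inj: "bc_proj1 a = bc_proj1 b \<Longrightarrow> bc_proj2 a = bc_proj2 b \<Longrightarrow> a = b"
proof -
  assume h1: "bc_proj1 a = bc_proj1 b" and h2: "bc_proj2 a = bc_proj2 b"
  have "(bc_proj1 a + bc_proj2 a) / 2 = (bc_proj1 b + bc_proj2 b) / 2" using h1 h2 by simp
  hence c1: "bc1 a = bc1 b" by (simp add: bc_proj1_def bc_proj2_def)
  have "(bc_proj2 a - bc_proj1 a) / (2 * \<i>) = (bc_proj2 b - bc_proj1 b) / (2 * \<i>)" using h1 h2 by simp
  hence c2: "bc2 a = bc2 b" by (simp add: bc_proj1_def bc_proj2_def)
  show ?thesis using c1 c2 by (rule bicomplex.expand[OF conjI])
qed

lemma decomp: "z = bc_e1 * of_cplx (bc_proj1 z) + bc_e2 * of_cplx (bc_proj2 z)"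
  by (rule proj_inj) (simp_all add: proj1_mult proj2_mult proj1_add proj2_add proj1_e1 proj1_e2
      proj2_e1 proj2_e2 proj_of_cplx)

lemma e_prods: "bc_e1 * bc_e1 = bc_e1" "bc_e2 * bc_e2 = bc_e2" "bc_e1 * bc_e2 = 0" "bc_e2 * bc_e1 = 0"
  by (simp_all add: e1_eq e2_eq bc_defs field_simps)

lemma vdecomp: "\<psi> = vadd (vscale bc_e1 (vproj1 \<psi>)) (vscale bc_e2 (vproj2 \<psi>))"
  unfolding vadd_def vscale_def vproj1_def vproj2_def
  by (rule ext) (rule decomp)

lemma vproj_V: "vproj1 x \<in> Vspace" "vproj2 x \<in> Vspace"
  by (simp_all add: Vspace_def vproj1_def vproj2_def of_cplx_def)

theorem mainTheorem20:
  fixes sp :: "'n::finite bvec \<Rightarrow> 'n bvec \<Rightarrow> bicomplex"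
    and A :: "'n bvec \<Rightarrow> 'n bvec"
    and \<psi> :: "'n bvec"
    and lam :: bicomplex
  assumes "bicomplex_hilbert_space sp"
    and "self_adjoint sp A"
    and "A \<psi> = vscale lam \<psi>"
    and "vproj1 \<psi> \<noteq> vzero"
    and "vproj2 \<psi> \<noteq> vzero"
  shows "lam \<in> hyperbolic"
proof -
  have sp: "bicomplex_scalar_product sp" using assms(1) by (simp add: bicomplex_hilbert_space_def)
  have add2: "\<And>\<phi> \<psi> \<chi>. sp \<phi> (vadd \<psi> \<chi>) = sp \<phi> \<psi> + sp \<phi> \<chi>"
    and sc2: "\<And>\<phi> \<psi> \<alpha>. sp \<phi> (vscale \<alpha> \<psi>) = \<alpha> * sp \<phi> \<psi>"
    and cj: "\<And>\<phi> \<psi>. sp \<phi> \<psi> = conj3 (sp \<psi> \<phi>)"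
    and dfn: "\<And>\<phi>. sp \<phi> \<phi> = 0 \<longleftrightarrow> \<phi> = vzero"
    and cl: "\<And>\<phi> \<psi>. \<phi> \<in> Vspace \<Longrightarrow> \<psi> \<in> Vspace \<Longrightarrow> sp \<phi> \<psi> \<in> range of_cplx"
    using sp unfolding bicomplex_scalar_product_def by blast+
  have add1: "sp (vadd \<psi> \<chi>) \<phi> = sp \<psi> \<phi> + sp \<chi> \<phi>" for \<phi> \<psi> \<chi>
    by (metis add2 cj conj3_add)
  have sc1: "sp (vscale \<alpha> \<psi>) \<phi> = conj3 \<alpha> * sp \<psi> \<phi>" for \<phi> \<psi> \<alpha>
    by (metis sc2 cj conj3_mult)
  define p1 where "p1 = vproj1 \<psi>"
  define p2 where "p2 = vproj2 \<psi>"
  obtain z1 where z1: "sp p1 p1 = of_cplx z1" using cl[OF vproj_V(1) vproj_V(1)] p1_def by blast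
  obtain z2 where z2: "sp p2 p2 = of_cplx z2" using cl[OF vproj_V(2) vproj_V(2)] p2_def by blast
  have z1nz: "z1 \<noteq> 0" using z1 dfn assms(4) p1_def by (auto simp: of_cplx_def zero_bicomplex_def)
  have z2nz: "z2 \<noteq> 0" using z2 dfn assms(5) p2_def by (auto simp: of_cplx_def zero_bicomplex_def)
  have pd: "\<psi> = vadd (vscale bc_e1 p1) (vscale bc_e2 p2)" using vdecomp p1_def p2_def by blast
  have s: "sp \<psi> \<psi> = bc_e1 * of_cplx z1 + bc_e2 * of_cplx z2"
    apply (subst (1 2) pd)
    apply (simp add: add1 add2 sc1 sc2 conj3_e1 conj3_e2 z1 z2 algebra_simps)
    apply (simp add: mult.assoc[symmetric] e_prods)
    done
  have "sp (A \<psi>) \<psi> = sp \<psi> (A \<psi>)" using assms(2) by (simp add: self_adjoint_def)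
  hence eq: "conj3 lam * sp \<psi> \<psi> = lam * sp \<psi> \<psi>" using assms(3) sc1 sc2 by simp
  have "bc_proj1 (conj3 lam) * z1 = bc_proj1 lam * z1"
    using arg_cong[OF eq, of bc_proj1]
    by (simp add: s proj1_mult proj1_add proj1_e1 proj1_e2 proj_of_cplx)
  hence q1: "bc_proj1 (conj3 lam) = bc_proj1 lam" using z1nz by simp
  have "bc_proj2 (conj3 lam) * z2 = bc_proj2 lam * z2"
    using arg_cong[OF eq, of bc_proj2]
    by (simp add: s proj2_mult proj2_add proj2_e1 proj2_e2 proj_of_cplx)
  hence q2: "bc_proj2 (conj3 lam) = bc_proj2 lam" using z2nz by simp
  have fx: "conj3 lam = lam" using proj_inj[OF q1 q2] .
  hence r1: "cnj (bc1 lam) = bc1 lam" and r2: "- cnj (bc2 lam) = bc2 lam"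
    by (metis bicomplex.sel conj3_def)+
  have "Im (bc1 lam) = 0" using r1 by (simp add: complex_eq_iff)
  moreover have "Re (bc2 lam) = 0" using r2 by (simp add: complex_eq_iff)
  ultimately have "lam = of_cplx (complex_of_real (Re (bc1 lam))) + of_cplx (complex_of_real (Im (bc2 lam))) * bc_j"
    by (intro bicomplex.expand conjI) (simp_all add: of_cplx_def bc_j_def bc_i1_def bc_i2_def bc_defs complex_eq_iff)
  thus ?thesis unfolding hyperbolic_def by blast
qed

end
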